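(* Assume $(g,\mathfrak{D})$ satisfy B1–B3 with constant $\kappa>0$. Then for every $X\in\mathbb{R}^{m\times n}$ and all $D'\neq D\in\mathfrak{D}$, $$\frac{|F_X(D')-F_X(D)|}{\|D'-D\|_{1\to2}}\le L_X(\bar g)\Big(1+\frac{1}{\sqrt\kappa}\|D'-D\|_{1\to2}\Big).$$
   Context: $\mathfrak{D}\subset\mathbb{R}^{m\times d}$. B1: $g=\chi_{\mathcal K}$ is the indicator of a set $\mathcal K\subset\mathbb{R}^d$ ($0$ on $\mathcal K$, $+\infty$ outside); B2: $\kappa\|\alpha\|_1^2\le\|D\alpha\|_2^2$ for all $\alpha\in\mathcal K$, $D\in\mathfrak{D}$; B3: $0\in\mathcal K$. $\mathcal{L}_x(D,\alpha)=\tfrac12\|x-D\alpha\|_2^2+g(\alpha)$, $f_x(D)=\inf_\alpha\mathcal{L}_x(D,\alpha)$, $F_X(D)=\frac1n\sum_i f_{x_i}(D)$. $\|\Delta\|_{1\to2}=\max_j\|\delta_j\|_2$. $\bar g(t)=2\sqrt{2t/\kappa}$ and $L_X(\bar g)=\frac1n\sum_i\|x_i\|_2\bar g(\|x_i\|_2^2/2)=\frac{2}{n\sqrt\kappa}\|X\|_F^2$. *)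

theory Defs
  imports "HOL-Analysis.Analysis"
begin

text \<open>Signals x live in real^'m, codes alpha in real^'d, dictionaries D are m x d
  matrices (real^'d^'m), data matrices X are m x n (real^'n^'m) with samples as columns.\<close>

definition l1norm :: "real^'d \<Rightarrow> real" where
  "l1norm \<alpha> = (\<Sum>j\<in>UNIV. \<bar>\<alpha> $ j\<bar>)"

text \<open>g = indicator of K; f_x(D) = inf_alpha (1/2 ||x - D alpha||^2 + g(alpha))
  = inf over alpha in K of 1/2 ||x - D alpha||^2.\<close>
definition fx :: "(real^'d) set \<Rightarrow> real^'m \<Rightarrow> real^'d^'m \<Rightarrow> real" where
  "fx K x D = Inf ((\<lambda>\<alpha>. (1/2) * (norm (x - D *v \<alpha>))\<^sup>2) ` K)"

definition FX :: "(real^'d) set \<Rightarrow> real^'n^'m \<Rightarrow> real^'d^'m \<Rightarrow> real" where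
  "FX K X D = (1 / real CARD('n)) * (\<Sum>i\<in>UNIV. fx K (column i X) D)"

definition norm12 :: "real^'d^'m \<Rightarrow> real" where
  "norm12 \<Delta> = Max (range (\<lambda>j. norm (column j \<Delta>)))"

definition gbar :: "real \<Rightarrow> real \<Rightarrow> real" where
  "gbar \<kappa> t = 2 * sqrt (2 * t / \<kappa>)"

definition LX :: "(real \<Rightarrow> real) \<Rightarrow> real^'n^'m \<Rightarrow> real" where
  "LX g X = (1 / real CARD('n)) *
     (\<Sum>i\<in>UNIV. norm (column i X) * g ((norm (column i X))\<^sup>2 / 2))"

end

theory Submission
  imports Defs
begin

lemma col_le_norm12: "norm (column j A) \<le> norm12 A"
  unfolding norm12_def by (rule Max_ge) auto

lemma norm12_nonneg: "0 \<le> norm12 A"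
  using col_le_norm12[of _ A] norm_ge_zero order_trans by blast

lemma norm12_sym: "norm12 (A - B) = norm12 (B - A)"
proof -
  have "\<And>j. column j (A - B) = - column j (B - A)"
    by (simp add: column_def vec_eq_iff)
  then show ?thesis unfolding norm12_def by simp
qed

lemma mv_bound: "norm (A *v a) \<le> norm12 A * l1norm a"
proof -
  have "norm (A *v a) = norm (\<Sum>i\<in>UNIV. (a$i) *s column i A)"
    by (simp add: matrix_mult_sum)
  also have "\<dots> \<le> (\<Sum>i\<in>UNIV. norm ((a$i) *s column i A))"
    by (rule norm_sum)
  also have "\<dots> \<le> (\<Sum>i\<in>UNIV. norm12 A * \<bar>a$i\<bar>)"
  proof (rule sum_mono)
    fix i
    have "norm ((a$i) *s column i A) = \<bar>a$i\<bar> * norm (column i A)"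
      by (simp add: scalar_mult_eq_scaleR)
    also have "\<dots> \<le> \<bar>a$i\<bar> * norm12 A"
      by (rule mult_left_mono[OF col_le_norm12]) simp
    finally show "norm ((a$i) *s column i A) \<le> norm12 A * \<bar>a$i\<bar>" by (simp add: mult.commute)
  qed
  also have "\<dots> = norm12 A * l1norm a"
    by (simp add: l1norm_def sum_distrib_left)
  finally show ?thesis .
qed

lemma l1norm_nonneg: "0 \<le> l1norm a"
  unfolding l1norm_def by (simp add: sum_nonneg)

lemma fx_diff:
  fixes K :: "(real^'d) set" and Dset :: "(real^'d^'m) set" and \<kappa> :: real
    and x :: "real^'m" and D D' :: "real^'d^'m"
  assumes kpos: "\<kappa> > 0"
    and B2: "\<And>\<alpha> E. \<alpha> \<in> K \<Longrightarrow> E \<in> Dset \<Longrightarrow> \<kappa> * (l1norm \<alpha>)\<^sup>2 \<le> (norm (E *v \<alpha>))\<^sup>2"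
    and B3: "0 \<in> K"
    and D: "D \<in> Dset"
  shows "fx K x D' - fx K x D \<le> norm x * gbar \<kappa> ((norm x)\<^sup>2 / 2) * norm12 (D' - D) * (1 + norm12 (D' - D) / sqrt \<kappa>)"
proof -
  define g where "g = gbar \<kappa> ((norm x)\<^sup>2 / 2)"
  define \<delta> where "\<delta> = norm12 (D' - D)"
  have g_eq: "g = 2 * norm x / sqrt \<kappa>"
    unfolding g_def gbar_def using kpos by (simp add: real_sqrt_divide)
  have gnn: "0 \<le> g" using g_eq kpos by simp
  have dnn: "0 \<le> \<delta>" unfolding \<delta>_def by (rule norm12_nonneg)
  define C where "C = norm x * g * \<delta> * (1 + \<delta> / sqrt \<kappa>)"
  have C_eq: "C = norm x * \<delta> * g + (\<delta> * g)\<^sup>2 / 2"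
    unfolding C_def g_eq using kpos by (simp add: field_simps power2_eq_square)
  have Cnn: "0 \<le> C" unfolding C_eq using dnn gnn by simp
  have bdd: "bdd_below ((\<lambda>\<alpha>. (1/2) * (norm (x - D' *v \<alpha>))\<^sup>2) ` K)"
    by (rule bdd_belowI[of _ 0]) auto
  have f0: "fx K x D' \<le> (1/2) * (norm x)\<^sup>2"
    unfolding fx_def using cInf_lower[OF imageI[OF B3] bdd] by simp
  have key: "fx K x D' - C \<le> (1/2) * (norm (x - D *v \<alpha>))\<^sup>2" if a: "\<alpha> \<in> K" for \<alpha>
  proof (cases "norm (x - D *v \<alpha>) \<le> norm x")
    case False
    then have "(norm x)\<^sup>2 \<le> (norm (x - D *v \<alpha>))\<^sup>2"
      by (simp add: power_mono)
    then show ?thesis using f0 Cnn by linarith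
  next
    case True
    have "norm (D *v \<alpha>) \<le> 2 * norm x"
      using norm_triangle_ineq4[of x "x - D *v \<alpha>"] True by simp
    then have "(norm (D *v \<alpha>))\<^sup>2 \<le> (2 * norm x)\<^sup>2"
      by (intro power_mono) auto
    with B2[OF a D] have "\<kappa> * (l1norm \<alpha>)\<^sup>2 \<le> (2 * norm x)\<^sup>2" by simp
    then have "(l1norm \<alpha> * sqrt \<kappa>)\<^sup>2 \<le> (2 * norm x)\<^sup>2"
      using kpos by (simp add: power_mult_distrib mult.commute)
    then have "l1norm \<alpha> * sqrt \<kappa> \<le> 2 * norm x"
      by (rule power2_le_imp_le) simp
    then have l1: "l1norm \<alpha> \<le> g"
      unfolding g_eq using kpos by (simp add: pos_le_divide_eq)
    have "norm ((D' - D) *v \<alpha>) \<le> \<delta> * l1norm \<alpha>"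
      unfolding \<delta>_def by (rule mv_bound)
    also have "\<dots> \<le> \<delta> * g" using l1 dnn by (simp add: mult_left_mono)
    finally have h: "norm ((D' - D) *v \<alpha>) \<le> \<delta> * g" .
    have eq: "x - D' *v \<alpha> = (x - D *v \<alpha>) - (D' - D) *v \<alpha>"
      by (simp add: algebra_simps)
    have "norm (x - D' *v \<alpha>) \<le> norm (x - D *v \<alpha>) + \<delta> * g"
      unfolding eq using norm_triangle_ineq4 h by (smt (verit))
    then have "(norm (x - D' *v \<alpha>))\<^sup>2 \<le> (norm (x - D *v \<alpha>) + \<delta> * g)\<^sup>2"
      by (simp add: power_mono)
    also have "\<dots> = (norm (x - D *v \<alpha>))\<^sup>2 + 2 * norm (x - D *v \<alpha>) * (\<delta> * g) + (\<delta> * g)\<^sup>2"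
      by (simp add: power2_sum)
    also have "\<dots> \<le> (norm (x - D *v \<alpha>))\<^sup>2 + 2 * norm x * (\<delta> * g) + (\<delta> * g)\<^sup>2"
      using True dnn gnn by (simp add: mult_right_mono)
    finally have "(1/2) * (norm (x - D' *v \<alpha>))\<^sup>2 \<le> (1/2) * (norm (x - D *v \<alpha>))\<^sup>2 + C"
      unfolding C_eq by simp
    moreover have "fx K x D' \<le> (1/2) * (norm (x - D' *v \<alpha>))\<^sup>2"
      unfolding fx_def using cInf_lower[OF imageI[OF a] bdd] by simp
    ultimately show ?thesis by simp
  qed
  have "fx K x D' - C \<le> fx K x D"
    unfolding fx_def[of K x D]
    by (rule cInf_greatest) (use B3 key in auto)
  then show ?thesis unfolding C_def g_def \<delta>_def by simp
qed

theorem mainTheorem10: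
  fixes K :: "(real^'d) set" and Dset :: "(real^'d^'m) set" and \<kappa> :: real
    and X :: "real^'n^'m" and D D' :: "real^'d^'m"
  assumes kpos: "\<kappa> > 0"
    and B2: "\<And>\<alpha> E. \<alpha> \<in> K \<Longrightarrow> E \<in> Dset \<Longrightarrow> \<kappa> * (l1norm \<alpha>)\<^sup>2 \<le> (norm (E *v \<alpha>))\<^sup>2"
    and B3: "0 \<in> K"
    and D: "D \<in> Dset" and D': "D' \<in> Dset" and ne: "D' \<noteq> D"
  shows "\<bar>FX K X D' - FX K X D\<bar> / norm12 (D' - D)
           \<le> LX (gbar \<kappa>) X * (1 + norm12 (D' - D) / sqrt \<kappa>)"
proof -
  define \<delta> where "\<delta> = norm12 (D' - D)"
  define h where "h = (\<lambda>i. norm (column i X) * gbar \<kappa> ((norm (column i X))\<^sup>2 / 2))"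
  have dnn: "0 \<le> \<delta>" unfolding \<delta>_def by (rule norm12_nonneg)
  have hnn: "0 \<le> h i" for i unfolding h_def gbar_def using kpos by simp
  have per: "\<bar>fx K (column i X) D' - fx K (column i X) D\<bar> \<le> h i * \<delta> * (1 + \<delta> / sqrt \<kappa>)" for i
  proof -
    have a: "fx K (column i X) D' - fx K (column i X) D \<le> h i * \<delta> * (1 + \<delta> / sqrt \<kappa>)"
      using fx_diff[OF kpos B2 B3 D, of "column i X" D'] unfolding h_def \<delta>_def by simp
    have b: "fx K (column i X) D - fx K (column i X) D' \<le> h i * \<delta> * (1 + \<delta> / sqrt \<kappa>)"
      using fx_diff[OF kpos B2 B3 D', of "column i X" D] norm12_sym[of D D']
      unfolding h_def \<delta>_def by simp
    show ?thesis using a b by simp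
  qed
  have "\<bar>FX K X D' - FX K X D\<bar> = (1 / real CARD('n)) *
      \<bar>\<Sum>i\<in>UNIV. fx K (column i X) D' - fx K (column i X) D\<bar>"
    unfolding FX_def right_diff_distrib[symmetric] sum_subtractf[symmetric] abs_mult by simp
  also have "\<dots> \<le> (1 / real CARD('n)) * (\<Sum>i\<in>UNIV. h i * \<delta> * (1 + \<delta> / sqrt \<kappa>))"
    by (rule mult_left_mono[OF order_trans[OF sum_abs sum_mono[OF per]]]) simp
  also have "\<dots> = LX (gbar \<kappa>) X * \<delta> * (1 + \<delta> / sqrt \<kappa>)"
    unfolding LX_def h_def by (simp add: sum_distrib_right)
  finally have main: "\<bar>FX K X D' - FX K X D\<bar> \<le> LX (gbar \<kappa>) X * \<delta> * (1 + \<delta> / sqrt \<kappa>)" .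
  have Lnn: "0 \<le> LX (gbar \<kappa>) X"
    unfolding LX_def using hnn unfolding h_def by (simp add: sum_nonneg)
  show ?thesis
  proof (cases "\<delta> = 0")
    case True
    then show ?thesis using Lnn unfolding \<delta>_def by simp
  next
    case False
    with dnn have "\<delta> > 0" by simp
    with main show ?thesis unfolding \<delta>_def[symmetric]
      by (simp add: divide_le_eq mult.commute mult.left_commute)
  qed
qed

end
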